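(* Let $n\ge2$, $\omega>0$, $G>0$, masses $m_1,\ldots,m_n>0$, pairwise distinct points $\vec R^0_1,\ldots,\vec R^0_n\in\mathbb{R}^3$ and unit vectors $\hat n_1,\ldots,\hat n_n\in\mathbb{R}^3$ be arbitrary, and let $g$ be the real symmetric $n\times n$ matrix $$g_{jj}=\sum_{\ell\ne j}\frac{Gm_\ell}{d_{j\ell}^3\,\omega}\big(1-3\cos^2\theta_{j\ell}\big),\qquad g_{jk}=-\frac{G\sqrt{m_jm_k}}{d_{jk}^3\,\omega}\big(\cos\varphi_{jk}+3\cos\theta_{jk}\cos\theta_{kj}\big)\ (j\ne k).$$ Then $$\|g\|_\infty\le\gamma\,\min\{6(n-1),\ C_1\ln(n-1)+C_2\},\qquad \gamma=\frac{Gm}{d^3\omega},$$ where $m:=\max_jm_j$, $d:=\min_{j\ne\ell}d_{j\ell}$, and $C_1,C_2$ are universal constants independent of $n$; one can take $C_1=288$, $C_2=966$.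
   Context: $\vec d_{jk}=\vec R^0_k-\vec R^0_j$, $d_{jk}=\|\vec d_{jk}\|$, $\hat d_{jk}=\vec d_{jk}/d_{jk}$; angles defined by $\cos\theta_{jk}=\hat n_j\cdot\hat d_{jk}$, $-\cos\theta_{kj}=\hat n_k\cdot\hat d_{jk}$, $\cos\varphi_{jk}=\hat n_j\cdot\hat n_k$. $\|\cdot\|_\infty$ denotes the operator norm. *)

theory Defs
  imports "HOL-Analysis.Analysis"
begin

definition d_vec :: "('n \<Rightarrow> real^3) \<Rightarrow> 'n \<Rightarrow> 'n \<Rightarrow> real^3" where
  "d_vec R j k = R k - R j"

definition d_len :: "('n \<Rightarrow> real^3) \<Rightarrow> 'n \<Rightarrow> 'n \<Rightarrow> real" where
  "d_len R j k = norm (d_vec R j k)"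

definition d_hat :: "('n \<Rightarrow> real^3) \<Rightarrow> 'n \<Rightarrow> 'n \<Rightarrow> real^3" where
  "d_hat R j k = d_vec R j k /\<^sub>R d_len R j k"

definition cos_theta :: "('n \<Rightarrow> real^3) \<Rightarrow> ('n \<Rightarrow> real^3) \<Rightarrow> 'n \<Rightarrow> 'n \<Rightarrow> real" where
  "cos_theta R nh j k = nh j \<bullet> d_hat R j k"

definition cos_phi :: "('n \<Rightarrow> real^3) \<Rightarrow> 'n \<Rightarrow> 'n \<Rightarrow> real" where
  "cos_phi nh j k = nh j \<bullet> nh k"

definition gmat :: "real \<Rightarrow> real \<Rightarrow> ('n::finite \<Rightarrow> real) \<Rightarrow> ('n \<Rightarrow> real^3) \<Rightarrow> ('n \<Rightarrow> real^3)
    \<Rightarrow> real^'n^'n" where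
  "gmat G \<omega> ms R nh = (\<chi> j k.
     if j = k then
       (\<Sum>l\<in>UNIV - {j}. G * ms l / (d_len R j l ^ 3 * \<omega>) * (1 - 3 * (cos_theta R nh j l)\<^sup>2))
     else
       - G * sqrt (ms j * ms k) / (d_len R j k ^ 3 * \<omega>)
         * (cos_phi nh j k + 3 * cos_theta R nh j k * cos_theta R nh k j))"

definition op_norm :: "real^'n^'n \<Rightarrow> real" where
  "op_norm A = onorm (\<lambda>x. A *v x)"

definition max_mass :: "('n::finite \<Rightarrow> real) \<Rightarrow> real" where
  "max_mass ms = Max (range ms)"

definition min_dist :: "('n \<Rightarrow> real^3) \<Rightarrow> real" where
  "min_dist R = Min {d_len R j l | j l. j \<noteq> l}"

end

theory Submission
  imports Defs
begin


lemma ball_packing: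
  fixes S :: "(real^3) set" and c :: "real^3"
  assumes "finite S" "d > 0" "r \<ge> 0" "\<And>p. p\<in>S \<Longrightarrow> dist c p \<le> r"
    "\<And>p q. p\<in>S \<Longrightarrow> q\<in>S \<Longrightarrow> p\<noteq>q \<Longrightarrow> d \<le> dist p q"
  shows "real (card S) * (d/2)^3 \<le> (r + d/2)^3"
proof -
  obtain u where u: "u > 0" and cb: "\<And>x e. e \<ge> 0 \<Longrightarrow> measure lborel (ball (x::real^3) e) = e^3 * u"
  proof -
    have "measure lborel (ball (0::real^3) 1) > 0" by (rule content_ball_pos) simp
    moreover have "\<And>x e. e \<ge> 0 \<Longrightarrow> measure lborel (ball (x::real^3) e) = e^3 * measure lborel (ball (0::real^3) 1)"
      by (subst content_ball_conv_unit_ball) auto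
    ultimately show ?thesis using that by blast
  qed
  have disj: "disjoint_family_on (\<lambda>p. ball p (d/2)) S"
    unfolding disjoint_family_on_def
  proof (intro ballI impI)
    fix p q assume "p\<in>S" "q\<in>S" "p\<noteq>q"
    then have h: "d \<le> dist p q" using assms by auto
    show "ball p (d/2) \<inter> ball q (d/2) = {}"
    proof (rule ccontr)
      assume "ball p (d/2) \<inter> ball q (d/2) \<noteq> {}"
      then obtain x where "dist p x < d/2" "dist q x < d/2" by auto
      then have "dist p q < d" by (metis dist_commute dist_triangle_less_add field_sum_of_halves)
      then show False using h by simp
    qed
  qed
  have "measure lborel (\<Union>p\<in>S. ball p (d/2)) = (\<Sum>p\<in>S. measure lborel (ball p (d/2)))"
  proof (rule measure_finite_Union)
    show "\<And>i. i \<in> S \<Longrightarrow> emeasure lborel (ball i (d / 2)) \<noteq> \<infinity>"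
      using emeasure_lborel_ball_finite by (simp add: less_top[symmetric])
  qed (use assms disj in auto)
  also have "\<dots> = real (card S) * ((d/2)^3 * u)" using cb assms(2) by simp
  finally have e1: "measure lborel (\<Union>p\<in>S. ball p (d/2)) = real (card S) * ((d/2)^3 * u)" .
  have sub: "(\<Union>p\<in>S. ball p (d/2)) \<subseteq> ball c (r + d/2)"
  proof
    fix x assume "x \<in> (\<Union>p\<in>S. ball p (d/2))"
    then obtain p where "p\<in>S" "dist p x < d/2" by auto
    then have "dist c p \<le> r" using assms by auto
    with \<open>dist p x < d/2\<close> show "x \<in> ball c (r + d/2)"
      using dist_triangle[of c x p] by simp
  qed
  have "measure lborel (\<Union>p\<in>S. ball p (d/2)) \<le> measure lborel (ball c (r + d/2))"
  proof (rule measure_mono_fmeasurable[OF sub])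
    show "(\<Union>p\<in>S. ball p (d / 2)) \<in> sets lborel" by (auto intro!: borel_open)
    show "ball c (r + d / 2) \<in> fmeasurable lborel"
      unfolding fmeasurable_def using emeasure_lborel_ball_finite[of c "r + d/2"] by auto
  qed
  also have "\<dots> = (r + d/2)^3 * u" using cb assms by simp
  finally have "real (card S) * (d/2)^3 * u \<le> (r + d/2)^3 * u" using e1 by simp
  then show ?thesis using u by simp
qed



lemma sum_rank_bound:
  fixes L :: "'a set" and \<rho> h :: "'a \<Rightarrow> real" and g :: "nat \<Rightarrow> real"
  assumes "finite L" "\<And>m n. m \<le> n \<Longrightarrow> g n \<le> g m"
   "\<And>l. l \<in> L \<Longrightarrow> h l \<le> g (card {l'\<in>L. \<rho> l' \<le> \<rho> l})"
  shows "sum h L \<le> (\<Sum>k=1..card L. g k)"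
  using assms(1,3)
proof (induction "card L" arbitrary: L)
  case 0 then show ?case by simp
next
  case (Suc n)
  then have ne: "L \<noteq> {}" by auto
  have "Max (\<rho> ` L) \<in> \<rho> ` L" using Suc.prems ne by simp
  then obtain a where a: "a \<in> L" "\<rho> a = Max (\<rho> ` L)" by auto
  have amax: "\<And>x. x \<in> L \<Longrightarrow> \<rho> x \<le> \<rho> a" using a Suc.prems by simp
  have ca: "{l'\<in>L. \<rho> l' \<le> \<rho> a} = L" using amax by auto
  have cardL: "card (L - {a}) = n" using Suc.hyps(2) a by simp
  have IH: "sum h (L-{a}) \<le> (\<Sum>k=1..n. g k)"
  proof -
    have "sum h (L-{a}) \<le> (\<Sum>k=1..card (L-{a}). g k)"
    proof (rule Suc.hyps(1))
      show "n = card (L - {a})" using cardL by simp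
      show "finite (L - {a})" using Suc.prems by simp
      fix l assume l: "l \<in> L - {a}"
      have "card {l' \<in> L - {a}. \<rho> l' \<le> \<rho> l} \<le> card {l' \<in> L. \<rho> l' \<le> \<rho> l}"
        by (rule card_mono) (use Suc.prems in auto)
      then have "g (card {l' \<in> L. \<rho> l' \<le> \<rho> l}) \<le> g (card {l' \<in> L - {a}. \<rho> l' \<le> \<rho> l})"
        by (rule assms(2))
      moreover have "h l \<le> g (card {l' \<in> L. \<rho> l' \<le> \<rho> l})" using Suc.prems l by auto
      ultimately show "h l \<le> g (card {l' \<in> L - {a}. \<rho> l' \<le> \<rho> l})" by linarith
    qed
    then show ?thesis using cardL by simp
  qed
  have ha: "h a \<le> g (Suc n)" using Suc.prems(2)[OF a(1)] ca Suc.hyps(2) by simp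
  have "sum h L = h a + sum h (L-{a})" using Suc.prems a by (simp add: sum.remove)
  also have "\<dots> \<le> g (Suc n) + (\<Sum>k=1..n. g k)" using IH ha by linarith
  also have "\<dots> = (\<Sum>k=1..card L. g k)" using Suc.hyps(2)[symmetric] by (simp add: sum.cl_ivl_Suc)
  finally show ?case .
qed

lemma harm_ln_bound: "(\<Sum>k=1..N. 1 / (real k + 1)) \<le> ln (real N + 1)"
proof (induction N)
  case 0 then show ?case by simp
next
  case (Suc N)
  have "ln ((real N + 1) / (real N + 2)) \<le> (real N + 1) / (real N + 2) - 1"
    by (rule ln_le_minus_one) simp
  also have "\<dots> = - (1 / (real N + 2))" by (simp add: field_simps)
  finally have "1 / (real N + 2) \<le> ln (real N + 2) - ln (real N + 1)"
    by (simp add: ln_div)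
  then show ?case using Suc by (simp add: sum.cl_ivl_Suc add.commute)
qed

lemma schur_bound:
  fixes A :: "real^'n^'n" and B :: "'n \<Rightarrow> 'n \<Rightarrow> real"
  assumes AB: "\<And>j k. \<bar>A$j$k\<bar> \<le> B j k" and sym: "\<And>j k. B j k = B k j"
    and row: "\<And>j. (\<Sum>k\<in>UNIV. B j k) \<le> M"
  shows "onorm (\<lambda>x. A *v x) \<le> M"
proof (rule onorm_le)
  fix x :: "real^'n"
  have Bnn: "\<And>j k. 0 \<le> B j k" using AB by (meson abs_ge_zero order_trans)
  have M0: "0 \<le> M"
  proof -
    obtain j :: 'n where True by blast
    have "0 \<le> (\<Sum>k\<in>UNIV. B j k)" by (rule sum_nonneg) (use Bnn in auto)
    then show ?thesis using row[of j] by linarith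
  qed
  have rowj: "((A *v x)$j)^2 \<le> M * (\<Sum>k\<in>UNIV. B j k * (x$k)^2)" for j
  proof -
    have "\<bar>(A *v x)$j\<bar> = \<bar>\<Sum>k\<in>UNIV. A$j$k * x$k\<bar>" by (simp add: matrix_vector_mult_def)
    also have "\<dots> \<le> (\<Sum>k\<in>UNIV. \<bar>A$j$k * x$k\<bar>)" by (rule sum_abs)
    also have "\<dots> \<le> (\<Sum>k\<in>UNIV. sqrt (B j k) * (sqrt (B j k) * \<bar>x$k\<bar>))"
    proof (rule sum_mono)
      fix k
      have "\<bar>A$j$k * x$k\<bar> = \<bar>A$j$k\<bar> * \<bar>x$k\<bar>" by (simp add: abs_mult)
      also have "\<dots> \<le> B j k * \<bar>x$k\<bar>" using AB[of j k] by (simp add: mult_right_mono)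
      also have "\<dots> = sqrt (B j k) * (sqrt (B j k) * \<bar>x$k\<bar>)"
        using Bnn[of j k] by (simp add: mult.assoc[symmetric])
      finally show "\<bar>A$j$k * x$k\<bar> \<le> sqrt (B j k) * (sqrt (B j k) * \<bar>x$k\<bar>)" .
    qed
    finally have e1: "\<bar>(A *v x)$j\<bar> \<le> (\<Sum>k\<in>UNIV. sqrt (B j k) * (sqrt (B j k) * \<bar>x$k\<bar>))" .
    have "((A *v x)$j)^2 = \<bar>(A *v x)$j\<bar>^2" by simp
    also have "\<dots> \<le> (\<Sum>k\<in>UNIV. sqrt (B j k) * (sqrt (B j k) * \<bar>x$k\<bar>))^2"
      by (rule power_mono[OF e1]) simp
    also have "\<dots> \<le> (\<Sum>k\<in>UNIV. (sqrt (B j k))^2) * (\<Sum>k\<in>UNIV. (sqrt (B j k) * \<bar>x$k\<bar>)^2)"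
      by (rule Cauchy_Schwarz_ineq_sum)
    also have "\<dots> = (\<Sum>k\<in>UNIV. B j k) * (\<Sum>k\<in>UNIV. B j k * (x$k)^2)"
      using Bnn by (simp add: power_mult_distrib)
    also have "\<dots> \<le> M * (\<Sum>k\<in>UNIV. B j k * (x$k)^2)"
      by (rule mult_right_mono[OF row]) (rule sum_nonneg, use Bnn in auto)
    finally show ?thesis .
  qed
  have "(norm (A *v x))^2 = (\<Sum>j\<in>UNIV. ((A *v x)$j)^2)"
    unfolding power2_norm_eq_inner inner_vec_def by (simp add: power2_eq_square)
  also have "\<dots> \<le> (\<Sum>j\<in>UNIV. M * (\<Sum>k\<in>UNIV. B j k * (x$k)^2))"
    by (rule sum_mono) (rule rowj)
  also have "\<dots> = M * (\<Sum>k\<in>UNIV. (\<Sum>j\<in>UNIV. B k j) * (x$k)^2)"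
  proof -
    have "(\<Sum>j\<in>UNIV. M * (\<Sum>k\<in>UNIV. B j k * (x$k)^2)) = M * (\<Sum>j\<in>UNIV. \<Sum>k\<in>UNIV. B j k * (x$k)^2)"
      by (simp only: sum_distrib_left)
    also have "(\<Sum>j\<in>UNIV. \<Sum>k\<in>UNIV. B j k * (x$k)^2) = (\<Sum>k\<in>UNIV. \<Sum>j\<in>UNIV. B j k * (x$k)^2)"
      by (rule sum.swap)
    also have "\<dots> = (\<Sum>k\<in>UNIV. (\<Sum>j\<in>UNIV. B k j) * (x$k)^2)"
      by (simp only: sum_distrib_right sym[of _ "k" for k])
    finally show ?thesis .
  qed
  also have "\<dots> \<le> M * (\<Sum>k\<in>UNIV. M * (x$k)^2)"
    by (intro mult_left_mono[OF sum_mono M0] mult_right_mono[OF row]) simp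
  also have "\<dots> = (M * norm x)^2"
    unfolding power_mult_distrib power2_norm_eq_inner inner_vec_def
    by (simp add: power2_eq_square sum_distrib_left mult.assoc)
  finally have "(norm (A *v x))^2 \<le> (M * norm x)^2" .
  then show "norm (A *v x) \<le> M * norm x"
    by (rule power2_le_imp_le) (use M0 in simp)
qed



theorem proposition2:
  fixes G \<omega> :: real and ms :: "'n::finite \<Rightarrow> real"
    and R nh :: "'n \<Rightarrow> real^3"
  assumes "CARD('n) \<ge> 2"
    and "\<omega> > 0" and "G > 0"
    and "\<And>j. ms j > 0"
    and "inj R"
    and "\<And>j. norm (nh j) = 1"
  shows "op_norm (gmat G \<omega> ms R nh)
     \<le> (G * max_mass ms / (min_dist R ^ 3 * \<omega>))
        * min (6 * (real CARD('n) - 1)) (288 * ln (real CARD('n) - 1) + 966)"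
proof -
  note card2 = assms(1) and \<omega>0 = assms(2) and G0 = assms(3) and ms0 = assms(4)
    and injR = assms(5) and nh1 = assms(6)
  define d where "d = min_dist R"
  define m where "m = max_mass ms"
  define N where "N = real CARD('n) - 1"
  define D where "D = d_len R"
  have Ddist: "D j l = dist (R j) (R l)" for j l
    by (simp add: D_def d_len_def d_vec_def dist_norm norm_minus_commute)
  have Dsym: "D j l = D l j" for j l by (simp add: Ddist dist_commute)
  have Dpos: "j \<noteq> l \<Longrightarrow> D j l > 0" for j l
    using injR by (auto simp: Ddist inj_def)
  define DS where "DS = {d_len R j l | j l. j \<noteq> l}"
  have DSfin: "finite DS"
  proof -
    have "DS \<subseteq> (\<lambda>(j,l). d_len R j l) ` UNIV" unfolding DS_def by auto
    then show ?thesis by (rule finite_subset) simp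
  qed
  obtain j0 l0 :: 'n where "j0 \<noteq> l0"
    using card2 by (metis One_nat_def card_le_Suc0_iff_eq finite not_less_eq_eq numeral_2_eq_2)
  then have DSne: "DS \<noteq> {}" unfolding DS_def by auto
  have dle: "j \<noteq> l \<Longrightarrow> d \<le> D j l" for j l
    unfolding d_def min_dist_def D_def using DSfin by (auto simp: DS_def[symmetric] intro!: Min_le) (auto simp: DS_def)
  have d0: "d > 0"
  proof -
    have "d \<in> DS" unfolding d_def min_dist_def DS_def[symmetric] using DSfin DSne by simp
    then show ?thesis using Dpos by (auto simp: DS_def D_def)
  qed
  have mle: "ms l \<le> m" for l unfolding m_def max_mass_def by simp
  have m0: "m > 0" using mle[of j0] ms0[of j0] by linarith
  have N1: "N \<ge> 1" using card2 unfolding N_def by simp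
  have cardL: "card (UNIV - {j}) = CARD('n) - 1" for j :: 'n by (simp add: card_Diff_singleton)
  have cardLr: "real (card (UNIV - {j})) = N" for j :: 'n
    using card2 unfolding cardL N_def by (simp add: of_nat_diff)
  have dhat: "norm (d_hat R j l) \<le> 1" for j l
  proof (cases "j = l")
    case True then show ?thesis by (simp add: d_hat_def d_vec_def)
  next
    case False
    then have "D j l > 0" by (rule Dpos)
    then show ?thesis by (simp add: d_hat_def D_def d_len_def)
  qed
  have ct: "\<bar>cos_theta R nh j l\<bar> \<le> 1" for j l
  proof -
    have "\<bar>cos_theta R nh j l\<bar> \<le> norm (nh j) * norm (d_hat R j l)"
      unfolding cos_theta_def by (rule Cauchy_Schwarz_ineq2)
    also have "\<dots> \<le> 1" using dhat[of j l] nh1[of j] by simp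
    finally show ?thesis .
  qed
  have cp: "\<bar>cos_phi nh j l\<bar> \<le> 1" for j l
  proof -
    have "\<bar>cos_phi nh j l\<bar> \<le> norm (nh j) * norm (nh l)"
      unfolding cos_phi_def by (rule Cauchy_Schwarz_ineq2)
    then show ?thesis using nh1 by simp
  qed
  define w where "w j l = G * m / (D j l ^ 3 * \<omega>)" for j l
  define B where "B j k = (if j = k then (\<Sum>l\<in>UNIV-{j}. 2 * w j l) else 4 * w j k)" for j k
  define g where "g = gmat G \<omega> ms R nh"
  have wsym: "w j l = w l j" for j l unfolding w_def using Dsym by simp
  have Bsym: "B j k = B k j" for j k unfolding B_def using wsym by simp
  have diag_term: "\<bar>G * ms l / (d_len R j l ^ 3 * \<omega>) * (1 - 3 * (cos_theta R nh j l)\<^sup>2)\<bar> \<le> 2 * w j l"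
    if "l \<noteq> j" for j l
  proof -
    have Dp: "D j l > 0" using Dpos that by auto
    have c2: "(cos_theta R nh j l)\<^sup>2 \<le> 1" using ct[of j l] by (simp add: abs_square_le_1)
    have a1: "\<bar>1 - 3 * (cos_theta R nh j l)\<^sup>2\<bar> \<le> 2" unfolding abs_le_iff using c2 zero_le_power2[of "cos_theta R nh j l"] by linarith
    have a2: "0 \<le> G * ms l / (D j l ^ 3 * \<omega>)" using G0 ms0[of l] Dp \<omega>0 by simp
    have a3: "G * ms l / (D j l ^ 3 * \<omega>) \<le> w j l"
      unfolding w_def using G0 mle[of l] Dp \<omega>0 by (intro divide_right_mono mult_left_mono) auto
    have "\<bar>G * ms l / (D j l ^ 3 * \<omega>) * (1 - 3 * (cos_theta R nh j l)\<^sup>2)\<bar>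
        = G * ms l / (D j l ^ 3 * \<omega>) * \<bar>1 - 3 * (cos_theta R nh j l)\<^sup>2\<bar>"
      by (simp only: abs_mult abs_of_nonneg[OF a2])
    also have "\<dots> \<le> w j l * 2" by (rule mult_mono[OF a3 a1 _ abs_ge_zero]) (use a2 a3 in linarith)
    finally show ?thesis by (simp add: D_def mult.commute)
  qed
  have AB: "\<bar>g$j$k\<bar> \<le> B j k" for j k
  proof (cases "j = k")
    case True
    have "\<bar>g$j$k\<bar> = \<bar>\<Sum>l\<in>UNIV - {j}. G * ms l / (d_len R j l ^ 3 * \<omega>) * (1 - 3 * (cos_theta R nh j l)\<^sup>2)\<bar>"
      using True by (simp add: g_def gmat_def)
    also have "\<dots> \<le> (\<Sum>l\<in>UNIV - {j}. \<bar>G * ms l / (d_len R j l ^ 3 * \<omega>) * (1 - 3 * (cos_theta R nh j l)\<^sup>2)\<bar>)"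
      by (rule sum_abs)
    also have "\<dots> \<le> (\<Sum>l\<in>UNIV-{j}. 2 * w j l)"
      by (rule sum_mono) (use diag_term in auto)
    finally show ?thesis using True by (simp add: B_def)
  next
    case False
    have Dp: "D j k > 0" using Dpos False by auto
    have s1: "sqrt (ms j * ms k) \<le> m"
    proof -
      have "sqrt (ms j * ms k) \<le> sqrt (m * m)"
        using mle ms0 m0 by (intro real_sqrt_le_mono mult_mono) (auto intro: less_imp_le)
      then show ?thesis using m0 by simp
    qed
    have s0: "0 \<le> sqrt (ms j * ms k)" using ms0[of j] ms0[of k] by simp
    have c4: "\<bar>cos_phi nh j k + 3 * cos_theta R nh j k * cos_theta R nh k j\<bar> \<le> 4"
    proof -
      have "\<bar>cos_theta R nh j k * cos_theta R nh k j\<bar> \<le> 1"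
        using ct[of j k] ct[of k j] by (simp add: abs_mult mult_le_one)
      then show ?thesis using cp[of j k] by (simp add: abs_le_iff)
    qed
    have b0: "0 \<le> G * sqrt (ms j * ms k) / (D j k ^ 3 * \<omega>)" using G0 Dp \<omega>0 s0 by simp
    have b1: "G * sqrt (ms j * ms k) / (D j k ^ 3 * \<omega>) \<le> w j k"
      unfolding w_def using G0 s1 Dp \<omega>0 by (intro divide_right_mono mult_left_mono) auto
    have "g$j$k = - (G * sqrt (ms j * ms k) / (D j k ^ 3 * \<omega>))
        * (cos_phi nh j k + 3 * cos_theta R nh j k * cos_theta R nh k j)"
      using False by (simp add: g_def gmat_def D_def)
    then have "\<bar>g$j$k\<bar> = G * sqrt (ms j * ms k) / (D j k ^ 3 * \<omega>)
        * \<bar>cos_phi nh j k + 3 * cos_theta R nh j k * cos_theta R nh k j\<bar>"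
      by (simp only: abs_mult abs_minus_cancel abs_of_nonneg[OF b0])
    also have "\<dots> \<le> w j k * 4" by (rule mult_mono[OF b1 c4 _ abs_ge_zero]) (use b0 b1 in linarith)
    finally show ?thesis using False by (simp add: B_def mult.commute)
  qed
  define \<gamma> where "\<gamma> = G * m / (d ^ 3 * \<omega>)"
  have \<gamma>0: "\<gamma> > 0" unfolding \<gamma>_def using G0 m0 d0 \<omega>0 by simp
  define Sj where "Sj j = (\<Sum>l\<in>UNIV-{j}. (d / D j l)^3)" for j
  have wg: "w j l = \<gamma> * (d / D j l)^3" if "l \<noteq> j" for j l
    using Dpos[of j l] that d0 \<omega>0 unfolding w_def \<gamma>_def by (auto simp: field_simps power_divide)
  have rowsum: "(\<Sum>k\<in>UNIV. B j k) = 6 * \<gamma> * Sj j" for j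
  proof -
    have "(\<Sum>k\<in>UNIV. B j k) = B j j + (\<Sum>k\<in>UNIV-{j}. B j k)"
      by (simp add: sum.remove)
    also have "\<dots> = (\<Sum>l\<in>UNIV-{j}. 2 * w j l) + (\<Sum>k\<in>UNIV-{j}. 4 * w j k)"
      by (simp add: B_def)
    also have "\<dots> = (\<Sum>l\<in>UNIV-{j}. 6 * (\<gamma> * (d / D j l)^3))"
      by (simp add: sum.distrib[symmetric] wg)
    also have "\<dots> = 6 * \<gamma> * Sj j" by (simp add: Sj_def sum_distrib_left mult.assoc)
    finally show ?thesis .
  qed
  define T where "T = min N (48 * ln N + 161)"
  have SjT: "Sj j \<le> T" for j
  proof -
    have tle1: "(d / D j l)^3 \<le> 1" if "l \<in> UNIV - {j}" for l
    proof -
      have "D j l > 0" "d \<le> D j l" using that Dpos dle by auto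
      then have "d / D j l \<le> 1" by simp
      then show ?thesis using d0 \<open>D j l > 0\<close> by (intro power_le_one) auto
    qed
    have S1: "Sj j \<le> N"
    proof -
      have "Sj j \<le> real (card (UNIV - {j})) * 1"
        unfolding Sj_def by (rule sum_bounded_above) (use tle1 in auto)
      then show ?thesis using cardLr by simp
    qed
    have rank: "(d / D j l)^3 \<le> 27 / (real (card {l'\<in>UNIV-{j}. D j l' \<le> D j l}) + 1)"
      if l: "l \<in> UNIV - {j}" for l
    proof -
      define P where "P = {l'. D j l' \<le> D j l}"
      have Dp: "D j l > 0" "d \<le> D j l" using l Dpos dle by auto
      have Djj: "D j j = 0" by (simp add: Ddist)
      have Pins: "P = insert j {l'\<in>UNIV-{j}. D j l' \<le> D j l}" unfolding P_def using Djj Dp by auto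
      have cP: "card P = card {l'\<in>UNIV-{j}. D j l' \<le> D j l} + 1" unfolding Pins by simp
      have cS: "card (R ` P) = card P" using injR by (simp add: card_image inj_on_def inj_def)
      have pack: "real (card (R ` P)) * (d/2)^3 \<le> (D j l + d/2)^3"
      proof (rule ball_packing)
        show "finite (R ` P)" by simp
        show "0 < d" by (rule d0)
        show "0 \<le> D j l" using Dp by simp
        show "\<And>p. p \<in> R ` P \<Longrightarrow> dist (R j) p \<le> D j l" unfolding P_def by (auto simp: Ddist)
        fix p q assume "p \<in> R ` P" "q \<in> R ` P" "p \<noteq> q"
        then obtain a b where ab: "p = R a" "q = R b" by auto
        with \<open>p \<noteq> q\<close> have "a \<noteq> b" by auto
        then have "d \<le> D a b" by (rule dle)
        then show "d \<le> dist p q" unfolding ab Ddist .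
      qed
      have "(D j l + d/2)^3 \<le> (3/2 * D j l)^3"
        using Dp d0 by (intro power_mono) auto
      with pack have "real (card P) * (d/2)^3 \<le> (3/2 * D j l)^3" using cS by simp
      then have "real (card P) * d^3 \<le> 27 * (D j l)^3" by (simp add: power_mult_distrib power_divide)
      then show ?thesis using Dp cP by (simp add: power_divide field_simps)
    qed
    have "Sj j \<le> (\<Sum>k=1..card (UNIV - {j}). 27 / (real k + 1))"
      unfolding Sj_def
    proof (rule sum_rank_bound[where \<rho> = "D j"])
      show "\<And>m n. m \<le> n \<Longrightarrow> 27 / (real n + 1) \<le> 27 / (real m + 1)"
        by (simp add: frac_le)
      show "finite (UNIV - {j})" by simp
      fix l assume "l \<in> UNIV - {j}"
      then show "(d / D j l)^3 \<le> 27 / (real (card {l'\<in>UNIV-{j}. D j l' \<le> D j l}) + 1)"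
        by (rule rank)
    qed
    also have "\<dots> = 27 * (\<Sum>k=1..card (UNIV - {j}). 1 / (real k + 1))"
      by (simp add: sum_distrib_left)
    also have "\<dots> \<le> 27 * ln (N + 1)"
      using harm_ln_bound[of "card (UNIV - {j})"] unfolding cardLr by simp
    also have "\<dots> \<le> 27 * (ln 2 + ln N)"
    proof -
      have "ln (N + 1) \<le> ln (2 * N)" using N1 by simp
      also have "\<dots> = ln 2 + ln N" using N1 by (simp add: ln_mult)
      finally show ?thesis by simp
    qed
    also have "\<dots> \<le> 48 * ln N + 161"
      using ln_2_less_1 ln_ge_zero[OF N1] by (simp add: distrib_left)
    finally show ?thesis using S1 unfolding T_def by simp
  qed
  have "op_norm g \<le> 6 * \<gamma> * T"
    unfolding op_norm_def
  proof (rule schur_bound[OF AB Bsym])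
    fix j show "(\<Sum>k\<in>UNIV. B j k) \<le> 6 * \<gamma> * T"
      unfolding rowsum using SjT[of j] \<gamma>0 by simp
  qed
  also have "6 * \<gamma> * T = \<gamma> * min (6 * N) (288 * ln N + 966)"
  proof -
    have "6 * T = min (6 * N) (288 * ln N + 966)" unfolding T_def by (auto simp: min_def)
    then show ?thesis by (simp add: mult.commute mult.left_commute)
  qed
  finally show ?thesis unfolding g_def \<gamma>_def d_def m_def N_def .
qed

end
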